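(* Let $H$ be a locally compact abelian group, $X$ a compact metric space and $\sigma=(\sigma_1,\dots,\sigma_k)$ a $k$-tuple of pairwise commuting surjective local homeomorphisms of $X$. Give $A=C(X,H)$ the $\mathbb{N}^k$-module structure $(n f)(x)=f(\sigma^n(x))$. Then the map $\Phi:Z^1(\mathbb{N}^k,A)\to Z^1_{\mathrm{cont}}(\mathcal{G}(X,\sigma),H)$ sending a semigroup cocycle $c$ to the unique continuous groupoid $1$-cocycle $\Phi(c)$ with $\Phi(c)(x,\mathbf{e}_i,\sigma_i(x))=c(\mathbf{e}_i)(x)$ for all $i$ and $x$ (explicitly $\Phi(c)(x,m-n,y)=c(m)(x)-c(n)(y)$ whenever $\sigma^m(x)=\sigma^n(y)$) is a well-defined group isomorphism, it restricts to an isomorphism $B^1(\mathbb{N}^k,A)\cong B^1_{\mathrm{cont}}(\mathcal{G}(X,\sigma),H)$, and hence induces an isomorphism $H^1(\mathbb{N}^k,C(X,H))\cong H^1_{\mathrm{cont}}(\mathcal{G}(X,\sigma),H)$.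
   Context: For $n\in\mathbb{N}^k$, $\sigma^n=\sigma_1^{n_1}\circ\cdots\circ\sigma_k^{n_k}$. Semigroup cohomology: $Z^1(\mathbb{N}^k,A)=\{\gamma:\mathbb{N}^k\to A\mid \gamma(m+n)=\gamma(m)+m\gamma(n)\}$, $B^1(\mathbb{N}^k,A)=\{n\mapsto \alpha-n\alpha : \alpha\in A\}$, $H^1=Z^1/B^1$. The groupoid $\mathcal{G}(X,\sigma)=\{(x,p-q,y): p,q\in\mathbb{N}^k,\ \sigma^p(x)=\sigma^q(y)\}$ with $(x,m,y)(y,n,z)=(x,m+n,z)$, $r(x,n,y)=x$, $s(x,n,y)=y$, and topology with basis $U\times\{p-q\}\times V$ ($U,V$ open, $\sigma^p(U)=\sigma^q(V)$). $Z^1_{\mathrm{cont}}(\mathcal{G},H)$ is the group of continuous homomorphisms $\mathcal{G}\to H$; $B^1_{\mathrm{cont}}(\mathcal{G},H)$ consists of those of the form $\gamma\mapsto f(r(\gamma))-f(s(\gamma))$ with $f\in C(X,H)$; $H^1_{\mathrm{cont}}=Z^1_{\mathrm{cont}}/B^1_{\mathrm{cont}}$. *)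

theory Defs
  imports "HOL-Analysis.Analysis" "HOL-Library.Function_Algebras" "HOL-Algebra.Coset"
begin

text \<open>Elements of N^k are represented as functions nat => nat vanishing
  at all indices >= k; elements of Z^k as functions nat => int vanishing
  at all indices >= k.\<close>

definition Nk :: "nat \<Rightarrow> (nat \<Rightarrow> nat) set" where
  "Nk k = {n. \<forall>i\<ge>k. n i = 0}"

definition unitvec :: "nat \<Rightarrow> (nat \<Rightarrow> nat)" where
  "unitvec i = (\<lambda>j. if j = i then 1 else 0)"

definition zdiff :: "(nat \<Rightarrow> nat) \<Rightarrow> (nat \<Rightarrow> nat) \<Rightarrow> (nat \<Rightarrow> int)" where
  "zdiff p q = (\<lambda>i. int (p i) - int (q i))"

fun spow :: "(nat \<Rightarrow> 'x \<Rightarrow> 'x) \<Rightarrow> nat \<Rightarrow> (nat \<Rightarrow> nat) \<Rightarrow> 'x \<Rightarrow> 'x" where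
  "spow \<sigma> 0 n = id"
| "spow \<sigma> (Suc j) n = spow \<sigma> j n \<circ> (\<sigma> j ^^ n j)"

definition local_homeo :: "('x::topological_space \<Rightarrow> 'x) \<Rightarrow> bool" where
  "local_homeo f \<longleftrightarrow> continuous_on UNIV f \<and>
     (\<forall>x. \<exists>U g. open U \<and> x \<in> U \<and> open (f ` U) \<and> homeomorphism U (f ` U) f g)"

text \<open>Module action (n f)(x) = f (sigma^n x). Cochains are extensional:
  they vanish (as the zero function) outside N^k.\<close>

definition sgZ1 :: "(nat \<Rightarrow> 'x::topological_space \<Rightarrow> 'x) \<Rightarrow> nat
    \<Rightarrow> ((nat \<Rightarrow> nat) \<Rightarrow> 'x \<Rightarrow> 'h::{topological_space,ab_group_add}) set" where
  "sgZ1 \<sigma> k = {\<gamma>. (\<forall>n\<in>Nk k. continuous_on UNIV (\<gamma> n))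
      \<and> (\<forall>m\<in>Nk k. \<forall>n\<in>Nk k. \<gamma> (m + n) = (\<lambda>x. \<gamma> m x + \<gamma> n (spow \<sigma> k m x)))
      \<and> (\<forall>n. n \<notin> Nk k \<longrightarrow> \<gamma> n = (\<lambda>x. 0))}"

definition sgB1 :: "(nat \<Rightarrow> 'x::topological_space \<Rightarrow> 'x) \<Rightarrow> nat
    \<Rightarrow> ((nat \<Rightarrow> nat) \<Rightarrow> 'x \<Rightarrow> 'h::{topological_space,ab_group_add}) set" where
  "sgB1 \<sigma> k = {(\<lambda>n. if n \<in> Nk k then (\<lambda>x. \<alpha> x - \<alpha> (spow \<sigma> k n x)) else (\<lambda>x. 0))
      | \<alpha>. continuous_on UNIV \<alpha>}"

definition sgZ1_grp :: "(nat \<Rightarrow> 'x::topological_space \<Rightarrow> 'x) \<Rightarrow> nat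
    \<Rightarrow> ((nat \<Rightarrow> nat) \<Rightarrow> 'x \<Rightarrow> 'h::{topological_space,ab_group_add}) monoid" where
  "sgZ1_grp \<sigma> k = \<lparr>carrier = sgZ1 \<sigma> k,
      mult = (\<lambda>c d. \<lambda>n x. c n x + d n x), one = (\<lambda>n x. 0)\<rparr>"

definition grpd :: "(nat \<Rightarrow> 'x \<Rightarrow> 'x) \<Rightarrow> nat \<Rightarrow> ('x \<times> (nat \<Rightarrow> int) \<times> 'x) set" where
  "grpd \<sigma> k = {(x, g, y). \<exists>p\<in>Nk k. \<exists>q\<in>Nk k. g = zdiff p q \<and> spow \<sigma> k p x = spow \<sigma> k q y}"

definition grpd_basis :: "(nat \<Rightarrow> 'x::topological_space \<Rightarrow> 'x) \<Rightarrow> nat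
    \<Rightarrow> ('x \<times> (nat \<Rightarrow> int) \<times> 'x) set set" where
  "grpd_basis \<sigma> k = {{(x, zdiff p q, y) | x y. x \<in> U \<and> y \<in> V \<and> spow \<sigma> k p x = spow \<sigma> k q y}
      | U V p q. open U \<and> open V \<and> p \<in> Nk k \<and> q \<in> Nk k}"

definition grpd_open :: "(nat \<Rightarrow> 'x::topological_space \<Rightarrow> 'x) \<Rightarrow> nat
    \<Rightarrow> ('x \<times> (nat \<Rightarrow> int) \<times> 'x) set \<Rightarrow> bool" where
  "grpd_open \<sigma> k = generate_topology (grpd_basis \<sigma> k)"

text \<open>Continuous groupoid homomorphisms G -> H (extensional: 0 outside G).\<close>
definition grpdZ1 :: "(nat \<Rightarrow> 'x::topological_space \<Rightarrow> 'x) \<Rightarrow> nat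
    \<Rightarrow> ('x \<times> (nat \<Rightarrow> int) \<times> 'x \<Rightarrow> 'h::{topological_space,ab_group_add}) set" where
  "grpdZ1 \<sigma> k = {\<phi>.
      (\<forall>W. open W \<longrightarrow> grpd_open \<sigma> k (grpd \<sigma> k \<inter> \<phi> -` W))
    \<and> (\<forall>x m y n z. (x, m, y) \<in> grpd \<sigma> k \<longrightarrow> (y, n, z) \<in> grpd \<sigma> k \<longrightarrow>
          \<phi> (x, m + n, z) = \<phi> (x, m, y) + \<phi> (y, n, z))
    \<and> (\<forall>g. g \<notin> grpd \<sigma> k \<longrightarrow> \<phi> g = 0)}"

definition grpdB1 :: "(nat \<Rightarrow> 'x::topological_space \<Rightarrow> 'x) \<Rightarrow> nat
    \<Rightarrow> ('x \<times> (nat \<Rightarrow> int) \<times> 'x \<Rightarrow> 'h::{topological_space,ab_group_add}) set" where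
  "grpdB1 \<sigma> k = {(\<lambda>(x, g, y). if (x, g, y) \<in> grpd \<sigma> k then f x - f y else 0)
      | f. continuous_on UNIV f}"

definition grpdZ1_grp :: "(nat \<Rightarrow> 'x::topological_space \<Rightarrow> 'x) \<Rightarrow> nat
    \<Rightarrow> ('x \<times> (nat \<Rightarrow> int) \<times> 'x \<Rightarrow> 'h::{topological_space,ab_group_add}) monoid" where
  "grpdZ1_grp \<sigma> k = \<lparr>carrier = grpdZ1 \<sigma> k,
      mult = (\<lambda>\<phi> \<psi>. \<lambda>g. \<phi> g + \<psi> g), one = (\<lambda>g. 0)\<rparr>"

text \<open>Phi(c)(x, m - n, y) = c(m)(x) - c(n)(y) for a chosen representation
  with sigma^m x = sigma^n y; independence of the choice is part of the theorem.\<close>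
definition Phi :: "(nat \<Rightarrow> 'x \<Rightarrow> 'x) \<Rightarrow> nat \<Rightarrow> ((nat \<Rightarrow> nat) \<Rightarrow> 'x \<Rightarrow> 'h::ab_group_add)
    \<Rightarrow> ('x \<times> (nat \<Rightarrow> int) \<times> 'x \<Rightarrow> 'h)" where
  "Phi \<sigma> k c = (\<lambda>(x, g, y). if (x, g, y) \<in> grpd \<sigma> k then
      (let (m, n) = (SOME (m, n). m \<in> Nk k \<and> n \<in> Nk k \<and> g = zdiff m n
                       \<and> spow \<sigma> k m x = spow \<sigma> k n y)
       in c m x - c n y) else 0)"

end

theory Submission
  imports Defs
begin


lemma funpow_comm_pt: "(\<And>x. f (g x) = g (f x)) \<Longrightarrow> (f ^^ a) (g x) = g ((f ^^ a) x)"
  by (induction a arbitrary: x) auto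

lemma funpow_comm2_pt: "(\<And>x. f (g x) = g (f x)) \<Longrightarrow> (f ^^ a) ((g ^^ b) x) = (g ^^ b) ((f ^^ a) x)"
proof -
  assume h: "\<And>x. f (g x) = g (f x)"
  have h2: "\<And>x. (f ^^ a) (g x) = g ((f ^^ a) x)" using h by (rule funpow_comm_pt)
  show ?thesis using funpow_comm_pt[of g "f ^^ a" b x] h2 by simp
qed

locale csys =
  fixes \<sigma> :: "nat \<Rightarrow> 'x::topological_space \<Rightarrow> 'x" and k :: nat
  assumes comm: "\<And>i j. i < k \<Longrightarrow> j < k \<Longrightarrow> \<sigma> i \<circ> \<sigma> j = \<sigma> j \<circ> \<sigma> i"
    and cont: "\<And>i. i < k \<Longrightarrow> continuous_on UNIV (\<sigma> i)"
begin

lemma comm_pt: "i < k \<Longrightarrow> j < k \<Longrightarrow> \<sigma> i (\<sigma> j x) = \<sigma> j (\<sigma> i x)"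
  using comm[of i j] by (metis comp_apply)

lemma spow_comm1: "j \<le> k \<Longrightarrow> i < k \<Longrightarrow> spow \<sigma> j n ((\<sigma> i ^^ a) x) = (\<sigma> i ^^ a) (spow \<sigma> j n x)"
proof (induction j arbitrary: x)
  case 0 then show ?case by simp
next
  case (Suc j)
  have "(\<sigma> j ^^ n j) ((\<sigma> i ^^ a) x) = (\<sigma> i ^^ a) ((\<sigma> j ^^ n j) x)"
    using Suc.prems by (intro funpow_comm2_pt comm_pt) auto
  then show ?case using Suc by simp
qed

lemma spow_add_le: "j \<le> k \<Longrightarrow> spow \<sigma> j (m + n) x = spow \<sigma> j m (spow \<sigma> j n x)"
proof (induction j arbitrary: x)
  case 0 then show ?case by simp
next
  case (Suc j)
  have "spow \<sigma> (Suc j) (m + n) x = spow \<sigma> j m (spow \<sigma> j n ((\<sigma> j ^^ m j) ((\<sigma> j ^^ n j) x)))"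
    using Suc by (simp add: funpow_add plus_fun_def)
  also have "\<dots> = spow \<sigma> j m ((\<sigma> j ^^ m j) (spow \<sigma> j n ((\<sigma> j ^^ n j) x)))"
    using Suc.prems by (simp add: spow_comm1)
  finally show ?case by (simp add: plus_fun_def)
qed

lemma spow_add: "spow \<sigma> k (m + n) x = spow \<sigma> k m (spow \<sigma> k n x)"
  by (rule spow_add_le) simp

lemma spow_add': "spow \<sigma> k (m + n) x = spow \<sigma> k n (spow \<sigma> k m x)"
  by (metis add.commute spow_add)

lemma spow_zero_le: "spow \<sigma> j 0 x = x"
  by (induction j arbitrary: x) auto

lemma spow_zero[simp]: "spow \<sigma> k 0 x = x"
  by (rule spow_zero_le)

lemma spow_unit_le: "spow \<sigma> j (unitvec i) x = (if i < j then \<sigma> i x else x)"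
  proof (induction j arbitrary: x)
  case 0 then show ?case by simp
next
  case (Suc j)
  then show ?case by (cases "i = j") (auto simp: unitvec_def)
qed

lemma spow_unit: "i < k \<Longrightarrow> spow \<sigma> k (unitvec i) x = \<sigma> i x"
  by (simp add: spow_unit_le)

lemma cont_funpow: "i < k \<Longrightarrow> continuous_on UNIV (\<sigma> i ^^ a)"
  by (induction a) (auto intro: continuous_on_compose2[OF cont] simp: continuous_on_id)

lemma cont_spow_le: "j \<le> k \<Longrightarrow> continuous_on UNIV (spow \<sigma> j n)"
proof (induction j)
  case 0 then show ?case by (simp add: continuous_on_id)
next
  case (Suc j)
  then show ?case
    using continuous_on_compose[OF cont_funpow[of j "n j"] Suc.IH[THEN continuous_on_subset]]
    by (simp add: comp_def)
qed

lemma cont_spow: "continuous_on UNIV (spow \<sigma> k n)"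
  by (rule cont_spow_le) simp

end

lemma Nk_add: "m \<in> Nk k \<Longrightarrow> n \<in> Nk k \<Longrightarrow> m + n \<in> Nk k"
  by (simp add: Nk_def)
lemma Nk_zero[simp]: "0 \<in> Nk k" by (simp add: Nk_def)
lemma Nk_unit: "i < k \<Longrightarrow> unitvec i \<in> Nk k" by (simp add: Nk_def unitvec_def)

lemma zdiff_add: "zdiff m n + zdiff p q = zdiff (m + p) (n + q)"
  by (simp add: zdiff_def fun_eq_iff)
lemma zdiff_eq: "zdiff m n = zdiff p q \<longleftrightarrow> m + q = p + n"
  unfolding zdiff_def fun_eq_iff plus_fun_def
proof (intro iffI allI)
  fix x assume "\<forall>x. int (m x) - int (n x) = int (p x) - int (q x)"
  then have "int (m x) - int (n x) = int (p x) - int (q x)" by blast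
  then show "m x + q x = p x + n x" by linarith
next
  fix x assume "\<forall>x. m x + q x = p x + n x"
  then have "m x + q x = p x + n x" by blast
  then show "int (m x) - int (n x) = int (p x) - int (q x)" by linarith
qed
lemma zdiff_self: "zdiff n n = 0"
  by (simp add: zdiff_def fun_eq_iff)

lemma Nk_induct:
  assumes "m \<in> Nk k" "P 0" "\<And>m i. m \<in> Nk k \<Longrightarrow> i < k \<Longrightarrow> P m \<Longrightarrow> P (m + unitvec i)"
  shows "P m"
proof -
  have "\<forall>m. m \<in> Nk k \<longrightarrow> sum m {..<k} = s \<longrightarrow> P m" for s
  proof (induction s)
    case 0
    { fix m assume m: "m \<in> Nk k" "sum m {..<k} = 0"
      then have "m = 0" by (auto simp: Nk_def fun_eq_iff) (metis lessThan_iff not_le)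
      with assms(2) have "P m" by simp }
    then show ?case by blast
  next
    case (Suc s)
    { fix m assume m: "m \<in> Nk k" "sum m {..<k} = Suc s"
      then obtain i where i: "i < k" "m i > 0"
        by (metis lessThan_iff neq0_conv sum.neutral nat.distinct(1))
      define m' where "m' = m(i := m i - 1)"
      have mm: "m = m' + unitvec i" using i by (auto simp: m'_def unitvec_def fun_eq_iff)
      have m'N: "m' \<in> Nk k" using m i by (auto simp: m'_def Nk_def)
      have "sum m {..<k} = sum m' {..<k} + sum (unitvec i) {..<k}"
        by (subst mm) (simp add: sum.distrib)
      moreover have "sum (unitvec i) {..<k} = 1" using i
        by (simp add: unitvec_def sum.delta)
      ultimately have "sum m' {..<k} = s" using m by simp
      with Suc m'N have "P m'" by blast
      with assms(3) m'N i mm have "P m" by simp }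
    then show ?case by blast
  qed
  with assms(1) show ?thesis by blast
qed




context csys begin

lemma cocyc: "c \<in> sgZ1 \<sigma> k \<Longrightarrow> m \<in> Nk k \<Longrightarrow> n \<in> Nk k \<Longrightarrow>
    c (m + n) x = c m x + c n (spow \<sigma> k m x)"
  unfolding sgZ1_def by (auto dest!: fun_cong)

lemma cocyc_out: "c \<in> sgZ1 \<sigma> k \<Longrightarrow> m \<notin> Nk k \<Longrightarrow> c m = (\<lambda>x. 0)"
  unfolding sgZ1_def by auto

lemma cocyc_cont: "c \<in> sgZ1 \<sigma> k \<Longrightarrow> m \<in> Nk k \<Longrightarrow> continuous_on UNIV (c m)"
  unfolding sgZ1_def by auto

lemma cocyc0: "c \<in> sgZ1 \<sigma> k \<Longrightarrow> c 0 x = 0"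
  using cocyc[of c 0 0 x] by simp

lemma welldef:
  assumes c: "c \<in> sgZ1 \<sigma> k" and N: "m \<in> Nk k" "n \<in> Nk k" "m' \<in> Nk k" "n' \<in> Nk k"
    and z: "zdiff m n = zdiff m' n'" and e: "spow \<sigma> k m x = spow \<sigma> k n y"
    and e': "spow \<sigma> k m' x = spow \<sigma> k n' y"
  shows "c m x - c n y = c m' x - c n' y"
proof -
  have s: "m + n' = m' + n" using z by (simp add: zdiff_eq)
  have 1: "c (m + n') x - c (n + n') y = c m x - c n y"
    using cocyc[OF c N(1) N(4), of x] cocyc[OF c N(2) N(4), of y] e by simp
  have 2: "c (m' + n) x - c (n' + n) y = c m' x - c n' y"
    using cocyc[OF c N(3) N(2), of x] cocyc[OF c N(4) N(2), of y] e' by simp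
  show ?thesis using 1 2 s by (simp add: add.commute)
qed

lemma Phi_formula:
  assumes c: "c \<in> sgZ1 \<sigma> k" and N: "m \<in> Nk k" "n \<in> Nk k"
    and e: "spow \<sigma> k m x = spow \<sigma> k n y"
  shows "Phi \<sigma> k c (x, zdiff m n, y) = c m x - c n y"
proof -
  have g: "(x, zdiff m n, y) \<in> grpd \<sigma> k" using N e by (auto simp: grpd_def)
  let ?P = "\<lambda>(m', n'). m' \<in> Nk k \<and> n' \<in> Nk k \<and> zdiff m n = zdiff m' n'
                       \<and> spow \<sigma> k m' x = spow \<sigma> k n' y"
  have ex: "\<exists>p. ?P p" using N e by (intro exI[of _ "(m, n)"]) auto
  obtain m' n' where mn: "(SOME p. ?P p) = (m', n')" by (cases "SOME p. ?P p") auto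
  have P: "?P (m', n')" using someI_ex[OF ex] mn by simp
  have "Phi \<sigma> k c (x, zdiff m n, y) = c m' x - c n' y"
    unfolding Phi_def using g mn by simp
  also have "\<dots> = c m x - c n y"
    using welldef[OF c N, of m' n' x y] P e by auto
  finally show ?thesis .
qed

lemma Phi_out: "g \<notin> grpd \<sigma> k \<Longrightarrow> Phi \<sigma> k c g = 0"
  unfolding Phi_def by (cases g) auto

lemma grpdE:
  assumes "(x, g, y) \<in> grpd \<sigma> k"
  obtains p q where "p \<in> Nk k" "q \<in> Nk k" "g = zdiff p q" "spow \<sigma> k p x = spow \<sigma> k q y"
  using assms unfolding grpd_def by auto

lemma grpdI: "p \<in> Nk k \<Longrightarrow> q \<in> Nk k \<Longrightarrow> spow \<sigma> k p x = spow \<sigma> k q y \<Longrightarrow>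
   (x, zdiff p q, y) \<in> grpd \<sigma> k"
  unfolding grpd_def by auto

lemma Phi_unit: "c \<in> sgZ1 \<sigma> k \<Longrightarrow> i < k \<Longrightarrow> Phi \<sigma> k c (x, zdiff (unitvec i) 0, \<sigma> i x) = c (unitvec i) x"
  using Phi_formula[of c "unitvec i" 0 x "\<sigma> i x"] by (simp add: Nk_unit spow_unit cocyc0)

lemma Phi_hom_grpd:
  assumes c: "c \<in> sgZ1 \<sigma> k" and g1: "(x, g, y) \<in> grpd \<sigma> k" and g2: "(y, h, z) \<in> grpd \<sigma> k"
  shows "Phi \<sigma> k c (x, g + h, z) = Phi \<sigma> k c (x, g, y) + Phi \<sigma> k c (y, h, z)"
proof -
  obtain p q where pq: "p \<in> Nk k" "q \<in> Nk k" "g = zdiff p q" "spow \<sigma> k p x = spow \<sigma> k q y"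
    using g1 by (rule grpdE)
  obtain r s where rs: "r \<in> Nk k" "s \<in> Nk k" "h = zdiff r s" "spow \<sigma> k r y = spow \<sigma> k s z"
    using g2 by (rule grpdE)
  have e: "spow \<sigma> k (p + r) x = spow \<sigma> k (q + s) z"
  proof -
    have "spow \<sigma> k (p + r) x = spow \<sigma> k r (spow \<sigma> k q y)" using pq by (simp add: spow_add')
    also have "\<dots> = spow \<sigma> k q (spow \<sigma> k r y)" by (metis spow_add spow_add')
    also have "\<dots> = spow \<sigma> k (q + s) z" using rs by (simp add: spow_add)
    finally show ?thesis .
  qed
  have gh: "g + h = zdiff (p + r) (q + s)" using pq rs by (simp add: zdiff_add)
  have A: "Phi \<sigma> k c (x, g + h, z) = c (p + r) x - c (q + s) z"
    unfolding gh by (rule Phi_formula[OF c Nk_add[OF pq(1) rs(1)] Nk_add[OF pq(2) rs(2)] e])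
  have B: "c (p + r) x = c p x + c r (spow \<sigma> k q y)" using cocyc[OF c pq(1) rs(1)] pq(4) by simp
  have C: "c (q + s) z = c s z + c q (spow \<sigma> k r y)"
    using cocyc[OF c rs(2) pq(2), of z] rs(4) by (simp add: add.commute)
  have D: "c q y + c r (spow \<sigma> k q y) = c r y + c q (spow \<sigma> k r y)"
    using cocyc[OF c pq(2) rs(1), of y] cocyc[OF c rs(1) pq(2), of y] by (simp add: add.commute)
  have F1: "Phi \<sigma> k c (x, g, y) = c p x - c q y" using Phi_formula[OF c pq(1,2,4)] pq(3) by simp
  have F2: "Phi \<sigma> k c (y, h, z) = c r y - c s z" using Phi_formula[OF c rs(1,2,4)] rs(3) by simp
  have E: "c r (spow \<sigma> k q y) - c q (spow \<sigma> k r y) = c r y - c q y"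
    using D by (metis add_diff_cancel_left add_diff_cancel_right diff_diff_eq2 diff_add_cancel add.commute)
  have "Phi \<sigma> k c (x, g + h, z) = c p x + (c r (spow \<sigma> k q y) - c q (spow \<sigma> k r y)) - c s z"
    unfolding A B C by (simp only: algebra_simps)
  also have "\<dots> = c p x + (c r y - c q y) - c s z" by (simp only: E)
  also have "\<dots> = (c p x - c q y) + (c r y - c s z)" by (simp only: algebra_simps)
  finally show ?thesis unfolding F1 F2 .
qed

end



context csys begin

lemma Phi_cont:
  fixes c :: "(nat \<Rightarrow> nat) \<Rightarrow> 'x \<Rightarrow> 'h::topological_ab_group_add"
  assumes c: "c \<in> sgZ1 \<sigma> k" and W: "open W"
  shows "grpd_open \<sigma> k (grpd \<sigma> k \<inter> Phi \<sigma> k c -` W)"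
proof -
  let ?S = "grpd \<sigma> k \<inter> Phi \<sigma> k c -` W"
  let ?K = "{B \<in> grpd_basis \<sigma> k. B \<subseteq> ?S}"
  have "?S \<subseteq> \<Union>?K"
  proof
    fix t assume t: "t \<in> ?S"
    obtain x g y where txy: "t = (x, g, y)" by (cases t) auto
    have tg: "(x, g, y) \<in> grpd \<sigma> k" using t txy by simp
    obtain p q where pq: "p \<in> Nk k" "q \<in> Nk k" "g = zdiff p q" "spow \<sigma> k p x = spow \<sigma> k q y"
      using tg by (rule grpdE)
    let ?f = "\<lambda>z. c p (fst z) - c q (snd z)"
    have cf: "continuous_on UNIV ?f"
      by (intro continuous_on_diff continuous_on_compose2[OF cocyc_cont[OF c pq(1)] continuous_on_fst[OF continuous_on_id]]
            continuous_on_compose2[OF cocyc_cont[OF c pq(2)] continuous_on_snd[OF continuous_on_id]]) auto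
    have op: "open (?f -` W \<inter> UNIV)" using cf W continuous_on_open_vimage[of UNIV ?f] by auto
    have "Phi \<sigma> k c t = c p x - c q y" using Phi_formula[OF c pq(1,2,4)] txy pq(3) by simp
    then have mem: "(x, y) \<in> ?f -` W \<inter> UNIV" using t by auto
    obtain U V where UV: "open U" "open V" "(x, y) \<in> U \<times> V" "U \<times> V \<subseteq> ?f -` W \<inter> UNIV"
      by (rule open_prod_elim[OF op mem])
    let ?B = "{(x', zdiff p q, y') | x' y'. x' \<in> U \<and> y' \<in> V \<and> spow \<sigma> k p x' = spow \<sigma> k q y'}"
    have B1: "?B \<in> grpd_basis \<sigma> k"
      unfolding grpd_basis_def mem_Collect_eq
      by (rule exI[of _ U], rule exI[of _ V], rule exI[of _ p], rule exI[of _ q]) (use UV pq in simp)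
    have B2: "?B \<subseteq> ?S"
    proof
      fix s assume "s \<in> ?B"
      then obtain x' y' where s: "s = (x', zdiff p q, y')" "x' \<in> U" "y' \<in> V" "spow \<sigma> k p x' = spow \<sigma> k q y'"
        by blast
      have "s \<in> grpd \<sigma> k" using s pq grpdI by simp
      moreover have "Phi \<sigma> k c s = c p x' - c q y'" using Phi_formula[OF c pq(1,2) s(4)] s by simp
      moreover have "c p x' - c q y' \<in> W" using UV s by auto
      ultimately show "s \<in> ?S" by simp
    qed
    have B3: "t \<in> ?B" unfolding txy pq(3) using pq(4) UV(3) by simp
    have "?B \<in> ?K" using B1 B2 by (rule CollectI[of _ ?B, OF conjI])
    then show "t \<in> \<Union>?K" using B3 by (rule UnionI)
  qed
  moreover have "\<Union>?K \<subseteq> ?S" by (rule Union_least) simp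
  ultimately have eq: "?S = \<Union>?K" by (rule subset_antisym)
  have "grpd_open \<sigma> k (\<Union>?K)" unfolding grpd_open_def
  proof (rule generate_topology.UN)
    fix B assume "B \<in> ?K"
    then have "B \<in> grpd_basis \<sigma> k" by simp
    then show "generate_topology (grpd_basis \<sigma> k) B" by (rule generate_topology.Basis)
  qed
  then show ?thesis by (rule ssubst[OF eq, where P="grpd_open \<sigma> k"])
qed

lemma Phi_Z1:
  fixes c :: "(nat \<Rightarrow> nat) \<Rightarrow> 'x \<Rightarrow> 'h::topological_ab_group_add"
  assumes c: "c \<in> sgZ1 \<sigma> k"
  shows "Phi \<sigma> k c \<in> grpdZ1 \<sigma> k"
  unfolding grpdZ1_def using Phi_cont[OF c] Phi_hom_grpd[OF c] Phi_out by blast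

lemma open_slice:
  assumes "grpd_open \<sigma> k S" "m \<in> Nk k"
  shows "open {x. (x, zdiff m 0, spow \<sigma> k m x) \<in> S}"
  using assms(1) unfolding grpd_open_def
proof (induction rule: generate_topology.induct)
  case UNIV then show ?case by simp
next
  case (Int a b)
  have "open {x. (x, zdiff m 0, spow \<sigma> k m x) \<in> a}" "open {x. (x, zdiff m 0, spow \<sigma> k m x) \<in> b}"
    using Int(3,4) by blast+
  then have "open ({x. (x, zdiff m 0, spow \<sigma> k m x) \<in> a} \<inter> {x. (x, zdiff m 0, spow \<sigma> k m x) \<in> b})"
    by (rule open_Int)
  moreover have "{x. (x, zdiff m 0, spow \<sigma> k m x) \<in> a \<inter> b} = {x. (x, zdiff m 0, spow \<sigma> k m x) \<in> a} \<inter> {x. (x, zdiff m 0, spow \<sigma> k m x) \<in> b}"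
    by blast
  ultimately show ?case by (simp only:)
next
  case (UN K)
  have "{x. (x, zdiff m 0, spow \<sigma> k m x) \<in> \<Union>K} = (\<Union>B\<in>K. {x. (x, zdiff m 0, spow \<sigma> k m x) \<in> B})"
    by blast
  moreover have "open (\<Union>B\<in>K. {x. (x, zdiff m 0, spow \<sigma> k m x) \<in> B})"
    by (rule open_UN) (use UN(2) in blast)
  ultimately show ?case by (simp only:)
next
  case (Basis s)
  then obtain U V p q where s: "s = {(x, zdiff p q, y) | x y. x \<in> U \<and> y \<in> V \<and> spow \<sigma> k p x = spow \<sigma> k q y}"
    "open U" "open V" "p \<in> Nk k" "q \<in> Nk k"
    unfolding grpd_basis_def by blast
  have "{x. (x, zdiff m 0, spow \<sigma> k m x) \<in> s} = (if m + q = p then U \<inter> (spow \<sigma> k m -` V) else {})"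
  proof (cases "m + q = p")
    case True
    then have "spow \<sigma> k p x = spow \<sigma> k q (spow \<sigma> k m x)" for x by (metis spow_add')
    then show ?thesis using True s(1) zdiff_eq[of m 0 p q] by auto
  next
    case False
    then show ?thesis using s(1) zdiff_eq[of m 0 p q] by auto
  qed
  moreover have "open (U \<inter> (spow \<sigma> k m -` V))"
    using cont_spow[of m] s(2,3) continuous_on_open_vimage[of UNIV "spow \<sigma> k m"] by auto
  ultimately have "open {x. (x, zdiff m 0, spow \<sigma> k m x) \<in> s}" by simp
  then show ?case unfolding zero_fun_def .
qed

lemma Z1_hom: "\<phi> \<in> grpdZ1 \<sigma> k \<Longrightarrow> (x, m, y) \<in> grpd \<sigma> k \<Longrightarrow> (y, n, z) \<in> grpd \<sigma> k \<Longrightarrow>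
          \<phi> (x, m + n, z) = \<phi> (x, m, y) + \<phi> (y, n, z)"
  unfolding grpdZ1_def by blast

lemma Z1_out: "\<phi> \<in> grpdZ1 \<sigma> k \<Longrightarrow> g \<notin> grpd \<sigma> k \<Longrightarrow> \<phi> g = 0"
  unfolding grpdZ1_def by blast

lemma Z1_cont: "\<phi> \<in> grpdZ1 \<sigma> k \<Longrightarrow> open W \<Longrightarrow> grpd_open \<sigma> k (grpd \<sigma> k \<inter> \<phi> -` W)"
  unfolding grpdZ1_def by blast

lemma Z1_diag:
  assumes "\<phi> \<in> grpdZ1 \<sigma> k"
  shows "\<phi> (y, 0, y) = 0"
proof -
  have z: "zdiff 0 0 = 0" by (rule zdiff_self)
  have g: "(y, 0, y) \<in> grpd \<sigma> k" using grpdI[of 0 0 y y] z by simp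
  have "\<phi> (y, 0 + 0, y) = \<phi> (y, 0, y) + \<phi> (y, 0, y)" by (rule Z1_hom[OF assms g g])
  then show ?thesis by simp
qed

lemma Z1_pos:
  fixes \<phi> :: "'x \<times> (nat \<Rightarrow> int) \<times> 'x \<Rightarrow> 'h::{ab_group_add,topological_space}"
  assumes ph: "\<phi> \<in> grpdZ1 \<sigma> k" and m: "m \<in> Nk k"
  shows "\<phi> (x, zdiff m 0, spow \<sigma> k m x) + \<phi> (spow \<sigma> k m x, zdiff 0 m, x) = 0"
proof -
  have g1: "(x, zdiff m 0, spow \<sigma> k m x) \<in> grpd \<sigma> k" using grpdI[OF m Nk_zero] by simp
  have g2: "(spow \<sigma> k m x, zdiff 0 m, x) \<in> grpd \<sigma> k" using grpdI[OF Nk_zero m] by simp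
  have "\<phi> (x, zdiff m 0 + zdiff 0 m, x) = 0" by (simp add: zdiff_add zdiff_self Z1_diag[OF ph])
  then show ?thesis using Z1_hom[OF ph g1 g2] by simp
qed

lemma Z1_unique_pos:
  fixes \<phi> :: "'x \<times> (nat \<Rightarrow> int) \<times> 'x \<Rightarrow> 'h::{ab_group_add,topological_space}"
  assumes ph: "\<phi> \<in> grpdZ1 \<sigma> k" and c: "c \<in> sgZ1 \<sigma> k"
    and u: "\<forall>i<k. \<forall>x. \<phi> (x, zdiff (unitvec i) 0, \<sigma> i x) = c (unitvec i) x"
    and m: "m \<in> Nk k"
  shows "\<phi> (x, zdiff m 0, spow \<sigma> k m x) = c m x"
proof -
  have "\<forall>x. \<phi> (x, zdiff m 0, spow \<sigma> k m x) = c m x"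
  proof (rule Nk_induct[OF m])
    show "\<forall>x. \<phi> (x, zdiff 0 0, spow \<sigma> k 0 x) = c 0 x"
      by (simp add: zdiff_self Z1_diag[OF ph] cocyc0[OF c])
  next
    fix m i assume m: "m \<in> Nk k" and i: "i < k" and IH: "\<forall>x. \<phi> (x, zdiff m 0, spow \<sigma> k m x) = c m x"
    show "\<forall>x. \<phi> (x, zdiff (m + unitvec i) 0, spow \<sigma> k (m + unitvec i) x) = c (m + unitvec i) x"
    proof
      fix x
      have g1: "(x, zdiff m 0, spow \<sigma> k m x) \<in> grpd \<sigma> k" using grpdI[OF m Nk_zero] by simp
      have g2: "(spow \<sigma> k m x, zdiff (unitvec i) 0, \<sigma> i (spow \<sigma> k m x)) \<in> grpd \<sigma> k"
        using grpdI[OF Nk_unit[OF i] Nk_zero] by (simp add: spow_unit i)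
      have e: "\<sigma> i (spow \<sigma> k m x) = spow \<sigma> k (m + unitvec i) x" by (simp add: spow_add' spow_unit i)
      have "\<phi> (x, zdiff (m + unitvec i) 0, spow \<sigma> k (m + unitvec i) x)
          = \<phi> (x, zdiff m 0, spow \<sigma> k m x) + \<phi> (spow \<sigma> k m x, zdiff (unitvec i) 0, \<sigma> i (spow \<sigma> k m x))"
        using Z1_hom[OF ph g1 g2] e by (simp add: zdiff_add)
      also have "\<dots> = c m x + c (unitvec i) (spow \<sigma> k m x)" using IH u i by simp
      also have "\<dots> = c (m + unitvec i) x" using cocyc[OF c m Nk_unit[OF i]] by simp
      finally show "\<phi> (x, zdiff (m + unitvec i) 0, spow \<sigma> k (m + unitvec i) x) = c (m + unitvec i) x" .
    qed
  qed
  then show ?thesis by blast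
qed

lemma Z1_unique:
  fixes \<phi> :: "'x \<times> (nat \<Rightarrow> int) \<times> 'x \<Rightarrow> 'h::{ab_group_add,topological_space}"
  assumes ph: "\<phi> \<in> grpdZ1 \<sigma> k" and c: "c \<in> sgZ1 \<sigma> k"
    and u: "\<forall>i<k. \<forall>x. \<phi> (x, zdiff (unitvec i) 0, \<sigma> i x) = c (unitvec i) x"
  shows "\<phi> = Phi \<sigma> k c"
proof
  fix t :: "'x \<times> (nat \<Rightarrow> int) \<times> 'x"
  obtain x g y where t: "t = (x, g, y)" by (cases t) auto
  show "\<phi> t = Phi \<sigma> k c t"
  proof (cases "t \<in> grpd \<sigma> k")
    case False then show ?thesis using Z1_out[OF ph] Phi_out by simp
  next
    case True
    then obtain m n where mn: "m \<in> Nk k" "n \<in> Nk k" "g = zdiff m n" "spow \<sigma> k m x = spow \<sigma> k n y"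
      using t grpdE by blast
    have g1: "(x, zdiff m 0, spow \<sigma> k m x) \<in> grpd \<sigma> k" using grpdI[OF mn(1) Nk_zero] by simp
    have g2: "(spow \<sigma> k m x, zdiff 0 n, y) \<in> grpd \<sigma> k" using grpdI[OF Nk_zero mn(2)] mn(4) by simp
    have "\<phi> t = \<phi> (x, zdiff m 0, spow \<sigma> k m x) + \<phi> (spow \<sigma> k n y, zdiff 0 n, y)"
      using Z1_hom[OF ph g1 g2] t mn by (simp add: zdiff_add)
    also have "\<dots> = c m x - c n y"
      using Z1_unique_pos[OF ph c u mn(1)] Z1_unique_pos[OF ph c u mn(2)] Z1_pos[OF ph mn(2), of y]
      by (simp add: eq_neg_iff_add_eq_0[symmetric])
    also have "\<dots> = Phi \<sigma> k c t" using Phi_formula[OF c mn(1,2,4)] t mn(3) by simp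
    finally show ?thesis .
  qed
qed

end



context csys begin

definition cof :: "('x \<times> (nat \<Rightarrow> int) \<times> 'x \<Rightarrow> 'h::{ab_group_add,topological_space}) \<Rightarrow> (nat \<Rightarrow> nat) \<Rightarrow> 'x \<Rightarrow> 'h"
  where "cof \<phi> = (\<lambda>m. if m \<in> Nk k then (\<lambda>x. \<phi> (x, zdiff m 0, spow \<sigma> k m x)) else (\<lambda>x. 0))"

lemma cof_Z1:
  fixes \<phi> :: "'x \<times> (nat \<Rightarrow> int) \<times> 'x \<Rightarrow> 'h::topological_ab_group_add"
  assumes ph: "\<phi> \<in> grpdZ1 \<sigma> k"
  shows "cof \<phi> \<in> sgZ1 \<sigma> k"
proof -
  have cont1: "continuous_on UNIV (\<lambda>x. \<phi> (x, zdiff m 0, spow \<sigma> k m x))" if m: "m \<in> Nk k" for m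
    unfolding continuous_on_open_invariant
  proof (intro allI impI)
    fix B :: "'h set" assume B: "open B"
    let ?A = "{x. (x, zdiff m 0, spow \<sigma> k m x) \<in> grpd \<sigma> k \<inter> \<phi> -` B}"
    have "open ?A" by (rule open_slice[OF Z1_cont[OF ph B] m])
    moreover have "?A \<inter> UNIV = (\<lambda>x. \<phi> (x, zdiff m 0, spow \<sigma> k m x)) -` B \<inter> UNIV"
      using grpdI[OF m Nk_zero] by auto
    ultimately show "\<exists>A. open A \<and> A \<inter> UNIV = (\<lambda>x. \<phi> (x, zdiff m 0, spow \<sigma> k m x)) -` B \<inter> UNIV"
      by blast
  qed
  have coc: "cof \<phi> (m + n) = (\<lambda>x. cof \<phi> m x + cof \<phi> n (spow \<sigma> k m x))"
    if m: "m \<in> Nk k" and n: "n \<in> Nk k" for m n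
  proof
    fix x
    have g1: "(x, zdiff m 0, spow \<sigma> k m x) \<in> grpd \<sigma> k" using grpdI[OF m Nk_zero] by simp
    have g2: "(spow \<sigma> k m x, zdiff n 0, spow \<sigma> k n (spow \<sigma> k m x)) \<in> grpd \<sigma> k"
      using grpdI[OF n Nk_zero] by simp
    have "\<phi> (x, zdiff m 0 + zdiff n 0, spow \<sigma> k n (spow \<sigma> k m x)) =
          \<phi> (x, zdiff m 0, spow \<sigma> k m x) + \<phi> (spow \<sigma> k m x, zdiff n 0, spow \<sigma> k n (spow \<sigma> k m x))"
      by (rule Z1_hom[OF ph g1 g2])
    then show "cof \<phi> (m + n) x = cof \<phi> m x + cof \<phi> n (spow \<sigma> k m x)"
      using m n Nk_add[OF m n] by (simp add: cof_def zdiff_add spow_add')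
  qed
  show ?thesis unfolding sgZ1_def
    using cont1 coc by (auto simp: cof_def)
qed

lemma Phi_cof:
  fixes \<phi> :: "'x \<times> (nat \<Rightarrow> int) \<times> 'x \<Rightarrow> 'h::topological_ab_group_add"
  assumes ph: "\<phi> \<in> grpdZ1 \<sigma> k"
  shows "Phi \<sigma> k (cof \<phi>) = \<phi>"
proof -
  have "\<forall>i<k. \<forall>x. \<phi> (x, zdiff (unitvec i) 0, \<sigma> i x) = cof \<phi> (unitvec i) x"
    by (simp add: cof_def Nk_unit spow_unit)
  from Z1_unique[OF ph cof_Z1[OF ph] this] show ?thesis by simp
qed

lemma Phi_inj:
  fixes c d :: "(nat \<Rightarrow> nat) \<Rightarrow> 'x \<Rightarrow> 'h::topological_ab_group_add"
  assumes c: "c \<in> sgZ1 \<sigma> k" and d: "d \<in> sgZ1 \<sigma> k" and e: "Phi \<sigma> k c = Phi \<sigma> k d"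
  shows "c = d"
proof (intro ext)
  fix m x
  show "c m x = d m x"
  proof (cases "m \<in> Nk k")
    case True
    have "c m x = Phi \<sigma> k c (x, zdiff m 0, spow \<sigma> k m x)"
      using Phi_formula[OF c True Nk_zero, of x "spow \<sigma> k m x"] by (simp add: cocyc0[OF c])
    also have "\<dots> = Phi \<sigma> k d (x, zdiff m 0, spow \<sigma> k m x)" using e by simp
    also have "\<dots> = d m x"
      using Phi_formula[OF d True Nk_zero, of x "spow \<sigma> k m x"] by (simp add: cocyc0[OF d])
    finally show ?thesis .
  next
    case False then show ?thesis using cocyc_out[OF c] cocyc_out[OF d] by simp
  qed
qed

lemma sgZ1_add:
  fixes c d :: "(nat \<Rightarrow> nat) \<Rightarrow> 'x \<Rightarrow> 'h::topological_ab_group_add"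
  assumes c: "c \<in> sgZ1 \<sigma> k" and d: "d \<in> sgZ1 \<sigma> k"
  shows "(\<lambda>n x. c n x + d n x) \<in> sgZ1 \<sigma> k"
  using c d unfolding sgZ1_def
  by (auto intro: continuous_on_add simp: fun_eq_iff algebra_simps)

lemma Phi_add:
  fixes c d :: "(nat \<Rightarrow> nat) \<Rightarrow> 'x \<Rightarrow> 'h::topological_ab_group_add"
  assumes c: "c \<in> sgZ1 \<sigma> k" and d: "d \<in> sgZ1 \<sigma> k"
  shows "Phi \<sigma> k (\<lambda>n x. c n x + d n x) = (\<lambda>g. Phi \<sigma> k c g + Phi \<sigma> k d g)"
proof
  fix t :: "'x \<times> (nat \<Rightarrow> int) \<times> 'x"
  obtain x g y where t: "t = (x, g, y)" by (cases t) auto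
  show "Phi \<sigma> k (\<lambda>n x. c n x + d n x) t = Phi \<sigma> k c t + Phi \<sigma> k d t"
  proof (cases "t \<in> grpd \<sigma> k")
    case False then show ?thesis by (simp only: Phi_out[OF False]) simp
  next
    case True
    then obtain m n where mn: "m \<in> Nk k" "n \<in> Nk k" "g = zdiff m n" "spow \<sigma> k m x = spow \<sigma> k n y"
      using t grpdE by blast
    note A = Phi_formula[OF c mn(1,2,4)] and B = Phi_formula[OF d mn(1,2,4)]
      and C = Phi_formula[OF sgZ1_add[OF c d] mn(1,2,4)]
    show ?thesis unfolding t mn(3) A B C by (simp add: algebra_simps)
  qed
qed

definition cob :: "('x \<Rightarrow> 'h::ab_group_add) \<Rightarrow> (nat \<Rightarrow> nat) \<Rightarrow> 'x \<Rightarrow> 'h"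
  where "cob \<alpha> = (\<lambda>n. if n \<in> Nk k then (\<lambda>x. \<alpha> x - \<alpha> (spow \<sigma> k n x)) else (\<lambda>x. 0))"

lemma cob_Z1:
  fixes \<alpha> :: "'x \<Rightarrow> 'h::topological_ab_group_add"
  assumes a: "continuous_on UNIV \<alpha>"
  shows "cob \<alpha> \<in> sgZ1 \<sigma> k"
proof -
  have "continuous_on UNIV (\<lambda>x. \<alpha> x - \<alpha> (spow \<sigma> k n x))" for n
    by (intro continuous_on_diff a continuous_on_compose2[OF a cont_spow]) auto
  then show ?thesis unfolding sgZ1_def cob_def
    by (auto simp: Nk_add spow_add' fun_eq_iff)
qed

lemma Phi_cob:
  fixes \<alpha> :: "'x \<Rightarrow> 'h::topological_ab_group_add"
  assumes a: "continuous_on UNIV \<alpha>"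
  shows "Phi \<sigma> k (cob \<alpha>) = (\<lambda>(x, g, y). if (x, g, y) \<in> grpd \<sigma> k then \<alpha> x - \<alpha> y else 0)"
proof
  fix t :: "'x \<times> (nat \<Rightarrow> int) \<times> 'x"
  obtain x g y where t: "t = (x, g, y)" by (cases t) auto
  show "Phi \<sigma> k (cob \<alpha>) t = (\<lambda>(x, g, y). if (x, g, y) \<in> grpd \<sigma> k then \<alpha> x - \<alpha> y else 0) t"
  proof (cases "t \<in> grpd \<sigma> k")
    case False then show ?thesis using Phi_out t by simp
  next
    case True
    then obtain m n where mn: "m \<in> Nk k" "n \<in> Nk k" "g = zdiff m n" "spow \<sigma> k m x = spow \<sigma> k n y"
      using t grpdE by blast
    show ?thesis
      using Phi_formula[OF cob_Z1[OF a] mn(1,2,4)] t mn True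
      by (simp add: cob_def)
  qed
qed

end



context csys begin

lemma rcos_img:
  fixes C :: "((nat \<Rightarrow> nat) \<Rightarrow> 'x \<Rightarrow> 'h::topological_ab_group_add) set"
  assumes C: "C \<subseteq> sgZ1 \<sigma> k" and c: "c \<in> sgZ1 \<sigma> k"
  shows "Phi \<sigma> k ` (C #>\<^bsub>sgZ1_grp \<sigma> k\<^esub> c) = (Phi \<sigma> k ` C) #>\<^bsub>grpdZ1_grp \<sigma> k\<^esub> Phi \<sigma> k c"
proof -
  have 1: "C #>\<^bsub>sgZ1_grp \<sigma> k\<^esub> c = (\<lambda>h. \<lambda>n x. h n x + c n x) ` C"
    unfolding r_coset_def sgZ1_grp_def by auto
  have 2: "(Phi \<sigma> k ` C) #>\<^bsub>grpdZ1_grp \<sigma> k\<^esub> Phi \<sigma> k c = (\<lambda>h'. \<lambda>g. h' g + Phi \<sigma> k c g) ` (Phi \<sigma> k ` C)"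
    unfolding r_coset_def grpdZ1_grp_def by auto
  have 3: "Phi \<sigma> k ` ((\<lambda>h. \<lambda>n x. h n x + c n x) ` C) = (\<lambda>h'. \<lambda>g. h' g + Phi \<sigma> k c g) ` (Phi \<sigma> k ` C)"
    unfolding image_image
  proof (rule image_cong[OF refl])
    fix h assume "h \<in> C"
    then show "Phi \<sigma> k (\<lambda>n x. h n x + c n x) = (\<lambda>g. Phi \<sigma> k h g + Phi \<sigma> k c g)"
      using Phi_add[OF subsetD[OF C] c] by blast
  qed
  show ?thesis unfolding 1 2 3 ..
qed

lemma setmult_img:
  fixes C D :: "((nat \<Rightarrow> nat) \<Rightarrow> 'x \<Rightarrow> 'h::topological_ab_group_add) set"
  assumes C: "C \<subseteq> sgZ1 \<sigma> k" and D: "D \<subseteq> sgZ1 \<sigma> k"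
  shows "Phi \<sigma> k ` (C <#>\<^bsub>sgZ1_grp \<sigma> k\<^esub> D) = (Phi \<sigma> k ` C) <#>\<^bsub>grpdZ1_grp \<sigma> k\<^esub> (Phi \<sigma> k ` D)"
proof -
  have 1: "C <#>\<^bsub>sgZ1_grp \<sigma> k\<^esub> D = (\<lambda>p. \<lambda>n x. fst p n x + snd p n x) ` (C \<times> D)"
    unfolding set_mult_def sgZ1_grp_def by force
  have 2: "(Phi \<sigma> k ` C) <#>\<^bsub>grpdZ1_grp \<sigma> k\<^esub> (Phi \<sigma> k ` D) = (\<lambda>p. \<lambda>g. Phi \<sigma> k (fst p) g + Phi \<sigma> k (snd p) g) ` (C \<times> D)"
    unfolding set_mult_def grpdZ1_grp_def by force
  have 3: "Phi \<sigma> k ` ((\<lambda>p. \<lambda>n x. fst p n x + snd p n x) ` (C \<times> D)) = (\<lambda>p. \<lambda>g. Phi \<sigma> k (fst p) g + Phi \<sigma> k (snd p) g) ` (C \<times> D)"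
    unfolding image_image
  proof (rule image_cong[OF refl])
    fix p assume p: "p \<in> C \<times> D"
    then have "fst p \<in> sgZ1 \<sigma> k" "snd p \<in> sgZ1 \<sigma> k" using C D by auto
    then show "Phi \<sigma> k (\<lambda>n x. fst p n x + snd p n x) = (\<lambda>g. Phi \<sigma> k (fst p) g + Phi \<sigma> k (snd p) g)"
      by (rule Phi_add)
  qed
  show ?thesis unfolding 1 2 3 ..
qed

lemma rcos_sub:
  fixes C :: "((nat \<Rightarrow> nat) \<Rightarrow> 'x \<Rightarrow> 'h::topological_ab_group_add) set"
  assumes C: "C \<subseteq> sgZ1 \<sigma> k" and c: "c \<in> sgZ1 \<sigma> k"
  shows "C #>\<^bsub>sgZ1_grp \<sigma> k\<^esub> c \<subseteq> sgZ1 \<sigma> k"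
  unfolding r_coset_def sgZ1_grp_def using C c sgZ1_add by auto

lemma B_sub: "(sgB1 \<sigma> k :: ((nat \<Rightarrow> nat) \<Rightarrow> 'x \<Rightarrow> 'h::topological_ab_group_add) set) \<subseteq> sgZ1 \<sigma> k"
  unfolding sgB1_def using cob_Z1 by (auto simp: cob_def)

lemma B_img: "Phi \<sigma> k ` (sgB1 \<sigma> k :: ((nat \<Rightarrow> nat) \<Rightarrow> 'x \<Rightarrow> 'h::topological_ab_group_add) set) = grpdB1 \<sigma> k"
proof -
  have e: "sgB1 \<sigma> k = {cob \<alpha> | \<alpha> :: 'x \<Rightarrow> 'h. continuous_on UNIV \<alpha>}"
    unfolding sgB1_def cob_def by simp
  show ?thesis unfolding e grpdB1_def
  proof (intro equalityI subsetI)
    fix \<phi> assume "\<phi> \<in> Phi \<sigma> k ` {cob \<alpha> | \<alpha> :: 'x \<Rightarrow> 'h. continuous_on UNIV \<alpha>}"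
    then obtain \<alpha> :: "'x \<Rightarrow> 'h" where a: "continuous_on UNIV \<alpha>" "\<phi> = Phi \<sigma> k (cob \<alpha>)" by blast
    then show "\<phi> \<in> {(\<lambda>(x, g, y). if (x, g, y) \<in> grpd \<sigma> k then f x - f y else 0) | f. continuous_on UNIV f}"
      using Phi_cob[OF a(1)] by blast
  next
    fix \<phi> assume "\<phi> \<in> {(\<lambda>(x, g, y). if (x, g, y) \<in> grpd \<sigma> k then f x - f y else 0) | f :: 'x \<Rightarrow> 'h. continuous_on UNIV f}"
    then obtain f :: "'x \<Rightarrow> 'h" where f: "continuous_on UNIV f"
      "\<phi> = (\<lambda>(x, g, y). if (x, g, y) \<in> grpd \<sigma> k then f x - f y else 0)" by blast
    then have "\<phi> = Phi \<sigma> k (cob f)" using Phi_cob[OF f(1)] by simp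
    moreover have "cob f \<in> {cob \<alpha> | \<alpha> :: 'x \<Rightarrow> 'h. continuous_on UNIV \<alpha>}" using f(1) by blast
    ultimately show "\<phi> \<in> Phi \<sigma> k ` {cob \<alpha> | \<alpha> :: 'x \<Rightarrow> 'h. continuous_on UNIV \<alpha>}" by blast
  qed
qed

lemma Phi_iso: "Phi \<sigma> k \<in> iso (sgZ1_grp \<sigma> k :: ((nat \<Rightarrow> nat) \<Rightarrow> 'x \<Rightarrow> 'h::topological_ab_group_add) monoid) (grpdZ1_grp \<sigma> k)"
proof -
  have "Phi \<sigma> k \<in> hom (sgZ1_grp \<sigma> k :: ((nat \<Rightarrow> nat) \<Rightarrow> 'x \<Rightarrow> 'h) monoid) (grpdZ1_grp \<sigma> k)"
    unfolding hom_def sgZ1_grp_def grpdZ1_grp_def using Phi_Z1 Phi_add by auto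
  moreover have "inj_on (Phi \<sigma> k) (sgZ1 \<sigma> k :: ((nat \<Rightarrow> nat) \<Rightarrow> 'x \<Rightarrow> 'h) set)"
    using Phi_inj by (auto intro: inj_onI)
  moreover have "Phi \<sigma> k ` (sgZ1 \<sigma> k :: ((nat \<Rightarrow> nat) \<Rightarrow> 'x \<Rightarrow> 'h) set) = grpdZ1 \<sigma> k"
  proof
    show "Phi \<sigma> k ` sgZ1 \<sigma> k \<subseteq> (grpdZ1 \<sigma> k :: ('x \<times> (nat \<Rightarrow> int) \<times> 'x \<Rightarrow> 'h) set)"
      using Phi_Z1 by auto
    show "(grpdZ1 \<sigma> k :: ('x \<times> (nat \<Rightarrow> int) \<times> 'x \<Rightarrow> 'h) set) \<subseteq> Phi \<sigma> k ` sgZ1 \<sigma> k"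
    proof
      fix \<phi> :: "'x \<times> (nat \<Rightarrow> int) \<times> 'x \<Rightarrow> 'h" assume ph: "\<phi> \<in> grpdZ1 \<sigma> k"
      then show "\<phi> \<in> Phi \<sigma> k ` sgZ1 \<sigma> k"
        using Phi_cof[OF ph] cof_Z1[OF ph] by (metis image_eqI)
    qed
  qed
  ultimately show ?thesis unfolding iso_def bij_betw_def sgZ1_grp_def grpdZ1_grp_def by simp
qed

lemma Mod_iso: "(\<lambda>C. Phi \<sigma> k ` C) \<in> iso ((sgZ1_grp \<sigma> k :: ((nat \<Rightarrow> nat) \<Rightarrow> 'x \<Rightarrow> 'h::topological_ab_group_add) monoid) Mod sgB1 \<sigma> k)
                              (grpdZ1_grp \<sigma> k Mod grpdB1 \<sigma> k)"
proof -
  let ?G = "sgZ1_grp \<sigma> k :: ((nat \<Rightarrow> nat) \<Rightarrow> 'x \<Rightarrow> 'h) monoid"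
  let ?H = "grpdZ1_grp \<sigma> k :: ('x \<times> (nat \<Rightarrow> int) \<times> 'x \<Rightarrow> 'h) monoid"
  let ?B = "sgB1 \<sigma> k :: ((nat \<Rightarrow> nat) \<Rightarrow> 'x \<Rightarrow> 'h) set"
  have cG: "carrier (?G Mod ?B) = {?B #>\<^bsub>?G\<^esub> c | c. c \<in> sgZ1 \<sigma> k}"
    by (auto simp: FactGroup_def RCOSETS_def sgZ1_grp_def)
  have cH: "carrier (?H Mod grpdB1 \<sigma> k) = {grpdB1 \<sigma> k #>\<^bsub>?H\<^esub> \<phi> | \<phi>. \<phi> \<in> grpdZ1 \<sigma> k}"
    by (auto simp: FactGroup_def RCOSETS_def grpdZ1_grp_def)
  have img: "Phi \<sigma> k ` (?B #>\<^bsub>?G\<^esub> c) = grpdB1 \<sigma> k #>\<^bsub>?H\<^esub> Phi \<sigma> k c" if c: "c \<in> sgZ1 \<sigma> k" for c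
    using rcos_img[OF B_sub c] B_img by metis
  have sub: "C \<subseteq> sgZ1 \<sigma> k" if "C \<in> carrier (?G Mod ?B)" for C
    using that rcos_sub[OF B_sub] unfolding cG by auto
  have hom: "(\<lambda>C. Phi \<sigma> k ` C) \<in> hom (?G Mod ?B) (?H Mod grpdB1 \<sigma> k)"
    unfolding hom_def
  proof (intro CollectI conjI ballI Pi_I)
    fix C assume "C \<in> carrier (?G Mod ?B)"
    then obtain c where c: "c \<in> sgZ1 \<sigma> k" "C = ?B #>\<^bsub>?G\<^esub> c" unfolding cG by blast
    then show "Phi \<sigma> k ` C \<in> carrier (?H Mod grpdB1 \<sigma> k)"
      unfolding cH using img[OF c(1)] Phi_Z1[OF c(1)] by blast
  next
    fix C D assume C: "C \<in> carrier (?G Mod ?B)" and D: "D \<in> carrier (?G Mod ?B)"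
    show "Phi \<sigma> k ` (C \<otimes>\<^bsub>?G Mod ?B\<^esub> D) = Phi \<sigma> k ` C \<otimes>\<^bsub>?H Mod grpdB1 \<sigma> k\<^esub> Phi \<sigma> k ` D"
      using setmult_img[OF sub[OF C] sub[OF D]] by simp
  qed
  have inj: "inj_on (Phi \<sigma> k) (sgZ1 \<sigma> k :: ((nat \<Rightarrow> nat) \<Rightarrow> 'x \<Rightarrow> 'h) set)"
    using Phi_inj by (auto intro: inj_onI)
  have "inj_on (\<lambda>C. Phi \<sigma> k ` C) (carrier (?G Mod ?B))"
    by (rule inj_onI) (use inj_on_image_eq_iff[OF inj sub sub] in blast)
  moreover have "(\<lambda>C. Phi \<sigma> k ` C) ` carrier (?G Mod ?B) = carrier (?H Mod grpdB1 \<sigma> k)"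
  proof
    show "(\<lambda>C. Phi \<sigma> k ` C) ` carrier (?G Mod ?B) \<subseteq> carrier (?H Mod grpdB1 \<sigma> k)"
      using hom unfolding hom_def by auto
    show "carrier (?H Mod grpdB1 \<sigma> k) \<subseteq> (\<lambda>C. Phi \<sigma> k ` C) ` carrier (?G Mod ?B)"
    proof
      fix E assume "E \<in> carrier (?H Mod grpdB1 \<sigma> k)"
      then obtain \<phi> where ph: "\<phi> \<in> grpdZ1 \<sigma> k" "E = grpdB1 \<sigma> k #>\<^bsub>?H\<^esub> \<phi>" unfolding cH by blast
      have "E = Phi \<sigma> k ` (?B #>\<^bsub>?G\<^esub> cof \<phi>)" using img[OF cof_Z1[OF ph(1)]] Phi_cof[OF ph(1)] ph(2) by simp
      moreover have "?B #>\<^bsub>?G\<^esub> cof \<phi> \<in> carrier (?G Mod ?B)" unfolding cG using cof_Z1[OF ph(1)] by blast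
      ultimately show "E \<in> (\<lambda>C. Phi \<sigma> k ` C) ` carrier (?G Mod ?B)" by blast
    qed
  qed
  ultimately show ?thesis using hom unfolding iso_def bij_betw_def by blast
qed

end

theorem corollary3p9:
  fixes \<sigma> :: "nat \<Rightarrow> 'x::metric_space \<Rightarrow> 'x"
    and k :: nat
  assumes H_lc: "locally_compact_space (euclidean :: 'h::{topological_ab_group_add,t2_space} topology)"
    and X_compact: "compact (UNIV :: 'x set)"
    and surj: "\<And>i. i < k \<Longrightarrow> surj (\<sigma> i)"
    and lh: "\<And>i. i < k \<Longrightarrow> local_homeo (\<sigma> i)"
    and comm: "\<And>i j. i < k \<Longrightarrow> j < k \<Longrightarrow> \<sigma> i \<circ> \<sigma> j = \<sigma> j \<circ> \<sigma> i"
  shows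
    "(\<forall>c \<in> (sgZ1 \<sigma> k :: ((nat \<Rightarrow> nat) \<Rightarrow> 'x \<Rightarrow> 'h) set).
        Phi \<sigma> k c \<in> grpdZ1 \<sigma> k
      \<and> (\<forall>x y m n. m \<in> Nk k \<longrightarrow> n \<in> Nk k \<longrightarrow> spow \<sigma> k m x = spow \<sigma> k n y \<longrightarrow>
            Phi \<sigma> k c (x, zdiff m n, y) = c m x - c n y)
      \<and> (\<forall>i<k. \<forall>x. Phi \<sigma> k c (x, zdiff (unitvec i) 0, \<sigma> i x) = c (unitvec i) x)
      \<and> (\<forall>\<phi> \<in> grpdZ1 \<sigma> k.
            (\<forall>i<k. \<forall>x. \<phi> (x, zdiff (unitvec i) 0, \<sigma> i x) = c (unitvec i) x)
            \<longrightarrow> \<phi> = Phi \<sigma> k c))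
   \<and> Phi \<sigma> k \<in> iso (sgZ1_grp \<sigma> k :: ((nat \<Rightarrow> nat) \<Rightarrow> 'x \<Rightarrow> 'h) monoid) (grpdZ1_grp \<sigma> k)
   \<and> Phi \<sigma> k ` (sgB1 \<sigma> k :: ((nat \<Rightarrow> nat) \<Rightarrow> 'x \<Rightarrow> 'h) set) = grpdB1 \<sigma> k
   \<and> (\<lambda>C. Phi \<sigma> k ` C) \<in> iso ((sgZ1_grp \<sigma> k :: ((nat \<Rightarrow> nat) \<Rightarrow> 'x \<Rightarrow> 'h) monoid) Mod sgB1 \<sigma> k)
                              (grpdZ1_grp \<sigma> k Mod grpdB1 \<sigma> k)"
proof -
  interpret csys \<sigma> k
    using comm lh unfolding local_homeo_def by unfold_locales auto
  have A: "\<forall>c \<in> (sgZ1 \<sigma> k :: ((nat \<Rightarrow> nat) \<Rightarrow> 'x \<Rightarrow> 'h) set).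
        Phi \<sigma> k c \<in> grpdZ1 \<sigma> k
      \<and> (\<forall>x y m n. m \<in> Nk k \<longrightarrow> n \<in> Nk k \<longrightarrow> spow \<sigma> k m x = spow \<sigma> k n y \<longrightarrow>
            Phi \<sigma> k c (x, zdiff m n, y) = c m x - c n y)
      \<and> (\<forall>i<k. \<forall>x. Phi \<sigma> k c (x, zdiff (unitvec i) 0, \<sigma> i x) = c (unitvec i) x)
      \<and> (\<forall>\<phi> \<in> grpdZ1 \<sigma> k.
            (\<forall>i<k. \<forall>x. \<phi> (x, zdiff (unitvec i) 0, \<sigma> i x) = c (unitvec i) x)
            \<longrightarrow> \<phi> = Phi \<sigma> k c)"
  proof (intro ballI conjI allI impI)
    fix c :: "(nat \<Rightarrow> nat) \<Rightarrow> 'x \<Rightarrow> 'h" assume c: "c \<in> sgZ1 \<sigma> k"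
    show "Phi \<sigma> k c \<in> grpdZ1 \<sigma> k" by (rule Phi_Z1[OF c])
    fix x y m n assume "m \<in> Nk k" "n \<in> Nk k" "spow \<sigma> k m x = spow \<sigma> k n y"
    then show "Phi \<sigma> k c (x, zdiff m n, y) = c m x - c n y" by (rule Phi_formula[OF c])
  next
    fix c :: "(nat \<Rightarrow> nat) \<Rightarrow> 'x \<Rightarrow> 'h" and i x assume c: "c \<in> sgZ1 \<sigma> k" and "i < k"
    then show "Phi \<sigma> k c (x, zdiff (unitvec i) 0, \<sigma> i x) = c (unitvec i) x" by (rule Phi_unit)
  next
    fix c :: "(nat \<Rightarrow> nat) \<Rightarrow> 'x \<Rightarrow> 'h" and \<phi> assume c: "c \<in> sgZ1 \<sigma> k" and ph: "\<phi> \<in> grpdZ1 \<sigma> k"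
      and u: "\<forall>i<k. \<forall>x. \<phi> (x, zdiff (unitvec i) 0, \<sigma> i x) = c (unitvec i) x"
    show "\<phi> = Phi \<sigma> k c" by (rule Z1_unique[OF ph c u])
  qed
  show ?thesis by (intro conjI A Phi_iso B_img Mod_iso)
qed


end
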